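(* Let $\kappa$ be a regular uncountable cardinal, $\vec C$ a $C$-sequence over $\kappa$ and $\rho_0$ the corresponding walks function. For all $\alpha<\beta<\kappa$ such that $\rho_{0\alpha}$ and $\rho_{0\beta}$ are incomparable (neither is a subset of the other), $\Delta(\rho_{0\alpha},\rho_{0\beta})\notin V(\vec C)$.
   Context: A $C$-sequence over $\kappa$ is $\langle C_\delta\mid\delta<\kappa\rangle$, each $C_\delta$ a closed subset of $\delta$ with $\sup(C_\delta)=\sup(\delta)$. Walks: $\mathrm{Tr}(\beta,\gamma)(0)=\gamma$, $\mathrm{Tr}(\beta,\gamma)(n)=\min(C_{\mathrm{Tr}(\beta,\gamma)(n-1)}\setminus\beta)$ if $\mathrm{Tr}(\beta,\gamma)(n-1)>\beta$, else $\beta$; $\rho_2(\beta,\gamma)$ least $l$ with $\mathrm{Tr}(\beta,\gamma)(l)=\beta$; $\rho_0(\beta,\gamma)=\langle\mathrm{otp}(C_{\mathrm{Tr}(\beta,\gamma)(n)}\cap\beta)\mid n<\rho_2(\beta,\gamma)\rangle$. The fiber $\rho_{0\delta}:\delta\to{}^{<\omega}\kappa$ is $\rho_{0\delta}(\xi)=\rho_0(\xi,\delta)$. For functions $f,g$ with ordinal domains, $\Delta(f,g)=\min\{\mathrm{dom}(f),\mathrm{dom}(g),\delta\mid\delta\in\mathrm{dom}(f)\cap\mathrm{dom}(g),\ f(\delta)\ne g(\delta)\}$. $\mathrm{acc}(\kappa)$ is the set of nonzero limit ordinals below $\kappa$, and $V(\vec C)=\{\delta\in\mathrm{acc}(\kappa)\mid\forall\alpha\in(\delta,\kappa)\,\forall\epsilon<\delta\,[C_\delta\cap[\epsilon,\delta)\ne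 C_\alpha\cap[\epsilon,\delta)]\}$. *)

theory Defs
  imports Main "HOL-Library.Countable_Set"
begin

text \<open>Ordinals below kappa are modelled as the elements of a well-ordered type 'a
whose order type is kappa.  The order type of UNIV is a regular uncountable cardinal:\<close>

definition regular_uncountable_cardinal_type :: "'a::wellorder itself \<Rightarrow> bool" where
  "regular_uncountable_cardinal_type (T :: 'a itself) \<longleftrightarrow>
     \<not> countable (UNIV :: 'a set) \<and>
     (\<forall>a::'a. ordLess2 (card_of {..<a}) (card_of (UNIV :: 'a set))) \<and>
     (\<forall>S::'a set. (\<forall>a. \<exists>s\<in>S. a \<le> s) \<longrightarrow> ordIso2 (card_of S) (card_of (UNIV :: 'a set)))"

definition ord_sup :: "'a::wellorder set \<Rightarrow> 'a" where
  "ord_sup S = (LEAST x. \<forall>y\<in>S. y \<le> x)"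

definition acc :: "'a::wellorder set" where
  "acc = {\<delta>. (\<exists>y. y < \<delta>) \<and> (\<forall>y<\<delta>. \<exists>z. y < z \<and> z < \<delta>)}"

definition closed_subset :: "'a::wellorder set \<Rightarrow> 'a \<Rightarrow> bool" where
  "closed_subset C \<delta> \<longleftrightarrow> C \<subseteq> {..<\<delta>} \<and>
     (\<forall>\<gamma><\<delta>. \<gamma> \<in> acc \<and> (\<forall>y<\<gamma>. \<exists>c\<in>C. y \<le> c \<and> c < \<gamma>) \<longrightarrow> \<gamma> \<in> C)"

definition C_sequence :: "('a::wellorder \<Rightarrow> 'a set) \<Rightarrow> bool" where
  "C_sequence C \<longleftrightarrow> (\<forall>\<delta>. closed_subset (C \<delta>) \<delta> \<and> ord_sup (C \<delta>) = ord_sup {..<\<delta>})"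

primrec Tr :: "('a::wellorder \<Rightarrow> 'a set) \<Rightarrow> 'a \<Rightarrow> 'a \<Rightarrow> nat \<Rightarrow> 'a" where
  "Tr C \<beta> \<gamma> 0 = \<gamma>"
| "Tr C \<beta> \<gamma> (Suc n) =
     (if \<beta> < Tr C \<beta> \<gamma> n then (LEAST x. x \<in> C (Tr C \<beta> \<gamma> n) \<and> \<beta> \<le> x) else \<beta>)"

definition rho2 :: "('a::wellorder \<Rightarrow> 'a set) \<Rightarrow> 'a \<Rightarrow> 'a \<Rightarrow> nat" where
  "rho2 C \<beta> \<gamma> = (LEAST l. Tr C \<beta> \<gamma> l = \<beta>)"

text \<open>order type of a set of ordinals (bounded below kappa)\<close>
definition otp :: "'a::wellorder set \<Rightarrow> 'a" where
  "otp S = (THE \<gamma>. \<exists>f. bij_betw f S {..<\<gamma>} \<and> strict_mono_on S f)"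

definition rho0 :: "('a::wellorder \<Rightarrow> 'a set) \<Rightarrow> 'a \<Rightarrow> 'a \<Rightarrow> 'a list" where
  "rho0 C \<beta> \<gamma> = map (\<lambda>n. otp (C (Tr C \<beta> \<gamma> n) \<inter> {..<\<beta>})) [0..<rho2 C \<beta> \<gamma>]"

definition rho0_fiber :: "('a::wellorder \<Rightarrow> 'a set) \<Rightarrow> 'a \<Rightarrow> 'a \<Rightarrow> 'a list option" where
  "rho0_fiber C \<delta> = (\<lambda>\<xi>. if \<xi> < \<delta> then Some (rho0 C \<xi> \<delta>) else None)"

definition Delta :: "('a::wellorder \<Rightarrow> 'b option) \<Rightarrow> ('a \<Rightarrow> 'b option) \<Rightarrow> 'a" where
  "Delta f g = (LEAST x. dom f = {..<x} \<or> dom g = {..<x} \<or>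
                        (x \<in> dom f \<inter> dom g \<and> f x \<noteq> g x))"

definition V :: "('a::wellorder \<Rightarrow> 'a set) \<Rightarrow> 'a set" where
  "V C = {\<delta> \<in> acc. \<forall>\<alpha>. \<delta> < \<alpha> \<longrightarrow>
             (\<forall>\<epsilon><\<delta>. C \<delta> \<inter> {\<epsilon>..<\<delta>} \<noteq> C \<alpha> \<inter> {\<epsilon>..<\<delta>})}"

end

theory Submission imports Defs begin

lemma wo_leq: "Well_order {(x::'a::wellorder, y). x \<le> y}"
proof -
  have f: "Field {(x::'a, y). x \<le> y} = UNIV" by (auto simp: Field_def)
  have "wf ({(x::'a, y). x \<le> y} - Id)"
  proof -
    have "{(x::'a, y). x \<le> y} - Id = {(x, y). x < y}" by auto
    thus ?thesis using wf by (simp add: wf_def) 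
  qed
  thus ?thesis unfolding f well_order_on_def linear_order_on_def partial_order_on_def preorder_on_def
    by (auto simp: refl_on_def trans_def antisym_def total_on_def)
qed

lemma sm_incr:
  fixes h :: "'a::wellorder \<Rightarrow> 'a"
  assumes "\<And>x y. x < y \<Longrightarrow> h x < h y"
  shows "x \<le> h x"
proof (induction x rule: less_induct)
  case (less x)
  show ?case
  proof (rule ccontr)
    assume "\<not> x \<le> h x"
    hence "h x < x" by simp
    hence "h (h x) < h x" using assms by blast
    moreover have "h x \<le> h (h x)" using less \<open>h x < x\<close> by blast
    ultimately show False by simp
  qed
qed


lemma smo_le: "strict_mono_on S (f::'a::linorder \<Rightarrow> 'b::linorder) \<Longrightarrow> x \<in> S \<Longrightarrow> y \<in> S \<Longrightarrow> (f x \<le> f y) = (x \<le> y)"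
  by (cases x y rule: linorder_cases) (auto dest: strict_mono_onD)

lemma otp_exists:
  fixes S :: "'a::wellorder set"
  assumes "S \<subseteq> {..<b}"
  shows "\<exists>(\<gamma>::'a) f. bij_betw f S {..<\<gamma>} \<and> strict_mono_on S f"
proof -
  let ?L = "{(x::'a, y). x \<le> y}"
  let ?r = "Restr ?L S"
  have FL: "Field ?L = UNIV" by (auto simp: Field_def)
  have Fr: "Field ?r = S" by (auto simp: Field_def)
  have WL: "Well_order ?L" by (rule wo_leq)
  have Wr: "Well_order ?r" using Well_order_Restr[OF WL] .
  show ?thesis
  using wellorders_totally_ordered[OF Wr WL]
  proof
    assume "\<exists>f. embed ?r ?L f"
    then obtain f where e: "embed ?r ?L f" by blast
    have c: "compat ?r ?L f" using embed_compat[OF e] .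
    have i: "inj_on f S" using embed_inj_on[OF Wr e] Fr by simp
    have sm: "strict_mono_on S f"
    proof (rule strict_mono_onI)
      fix x y assume "x \<in> S" "y \<in> S" "x < y"
      hence "f x \<le> f y" using c by (auto simp: compat_def)
      moreover have "f x \<noteq> f y" using i \<open>x \<in> S\<close> \<open>y \<in> S\<close> \<open>x < y\<close> by (auto dest: inj_onD)
      ultimately show "f x < f y" by simp
    qed
    have "wo_rel.ofilter ?L (f ` S)" using embed_Field_ofilter[OF Wr WL e] Fr by simp
    hence "(\<exists>a. f ` S = underS ?L a) \<or> f ` S = UNIV"
      using wo_rel.ofilter_underS_Field[of ?L "f ` S"] WL FL by (auto simp: wo_rel_def)
    thus ?thesis
    proof
      assume "\<exists>a. f ` S = underS ?L a"
      then obtain a where "f ` S = underS ?L a" by blast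
      hence "f ` S = {..<a}" by (auto simp: underS_def)
      hence "bij_betw f S {..<a}" using i by (simp add: bij_betw_def)
      thus ?thesis using sm by blast
    next
      assume su: "f ` S = UNIV"
      define g where "g = the_inv_into S f"
      have gS: "g x \<in> S" for x using the_inv_into_into[OF i] su g_def by auto
      have fg: "f (g x) = x" for x using f_the_inv_into_f[OF i] su g_def by auto
      have "x < y \<Longrightarrow> g x < g y" for x y
        using smo_le[OF sm gS gS, of y x] fg by (metis leD linorder_not_less)
      hence "b \<le> g b" by (rule sm_incr)
      moreover have "g b < b" using gS assms by auto
      ultimately show ?thesis by simp
    qed
  next
    assume "\<exists>f. embed ?L ?r f"
    then obtain f where e: "embed ?L ?r f" by blast
    have c: "compat ?L ?r f" using embed_compat[OF e] .
    have i: "inj f" using embed_inj_on[OF WL e] FL by simp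
    have fS: "f x \<in> S" for x using embed_Field[OF e] FL Fr by auto
    have "x < y \<Longrightarrow> f x < f y" for x y
    proof -
      assume "x < y"
      hence "f x \<le> f y" using c by (auto simp: compat_def)
      moreover have "f x \<noteq> f y" using i \<open>x < y\<close> by (auto dest: injD)
      ultimately show "f x < f y" by simp
    qed
    hence "b \<le> f b" by (rule sm_incr)
    moreover have "f b < b" using fS assms by auto
    ultimately show ?thesis by simp
  qed
qed

lemma inv_smo:
  fixes f :: "'a::linorder \<Rightarrow> 'b::linorder"
  assumes "bij_betw f S T" "strict_mono_on S f"
  shows "strict_mono_on T (the_inv_into S f)"
proof (rule strict_mono_onI)
  fix x y assume xy: "x \<in> T" "y \<in> T" "x < y"
  have i: "inj_on f S" and im: "f ` S = T" using assms(1) by (auto simp: bij_betw_def)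
  have gx: "the_inv_into S f x \<in> S" "f (the_inv_into S f x) = x"
    using the_inv_into_into[OF i] f_the_inv_into_f[OF i] xy im by auto
  have gy: "the_inv_into S f y \<in> S" "f (the_inv_into S f y) = y"
    using the_inv_into_into[OF i] f_the_inv_into_f[OF i] xy im by auto
  show "the_inv_into S f x < the_inv_into S f y"
    using smo_le[OF assms(2) gy(1) gx(1)] gx gy xy by (metis leD linorder_not_less)
qed

lemma inv_bij:
  assumes "bij_betw f S T"
  shows "bij_betw (the_inv_into S f) T S"
  using assms bij_betw_the_inv_into by blast

lemma sm_incr_on:
  fixes h :: "'a::wellorder \<Rightarrow> 'a"
  assumes "strict_mono_on {..<c} h"
  shows "x < c \<Longrightarrow> x \<le> h x"
proof (induction x rule: less_induct)
  case (less x)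
  show ?case
  proof (rule ccontr)
    assume "\<not> x \<le> h x"
    hence "h x < x" by simp
    moreover have "h x < c" using less.prems \<open>h x < x\<close> by simp
    ultimately have "h (h x) < h x" using strict_mono_onD[OF assms, of "h x" x] less.prems by simp
    moreover have "h x \<le> h (h x)" using less \<open>h x < x\<close> by auto
    ultimately show False by simp
  qed
qed

lemma otp_le:
  fixes S :: "'a::wellorder set" and g1 g2 :: 'a
  assumes b1: "bij_betw f1 S {..<g1}" and s1: "strict_mono_on S f1"
    and b2: "bij_betw f2 S {..<g2}" and s2: "strict_mono_on S f2"
  shows "g1 \<le> g2"
proof (rule ccontr)
  assume "\<not> g1 \<le> g2"
  hence lt: "g2 < g1" by simp
  define h where "h = f2 \<circ> the_inv_into S f1"
  have bh: "bij_betw h {..<g1} {..<g2}" unfolding h_def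
    using bij_betw_trans[OF inv_bij[OF b1] b2] .
  have sh: "strict_mono_on {..<g1} h" unfolding h_def
  proof (rule strict_mono_onI)
    fix x y assume "x \<in> {..<g1}" "y \<in> {..<g1}" "x < y"
    moreover have "the_inv_into S f1 ` {..<g1} \<subseteq> S" using inv_bij[OF b1] by (auto simp: bij_betw_def)
    ultimately have "the_inv_into S f1 x \<in> S" "the_inv_into S f1 y \<in> S"
       "the_inv_into S f1 x < the_inv_into S f1 y"
      using strict_mono_onD[OF inv_smo[OF b1 s1]] by auto
    thus "(f2 \<circ> the_inv_into S f1) x < (f2 \<circ> the_inv_into S f1) y"
      using strict_mono_onD[OF s2] by auto
  qed
  have "g2 \<le> h g2" using sm_incr_on[OF sh lt] .
  moreover have "h g2 < g2" using bh lt by (auto simp: bij_betw_def)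
  ultimately show False by simp
qed

lemma otp_eq:
  fixes S :: "'a::wellorder set" and g :: 'a
  assumes "bij_betw f S {..<g}" "strict_mono_on S f"
  shows "otp S = g"
  unfolding otp_def
proof (rule the_equality)
  show "\<exists>f. bij_betw f S {..<g} \<and> strict_mono_on S f" using assms by blast
next
  fix g' :: 'a assume "\<exists>f. bij_betw f S {..<g'} \<and> strict_mono_on S f"
  then obtain f' where "bij_betw f' S {..<g'}" "strict_mono_on S f'" by blast
  thus "g' = g" using otp_le[OF assms] otp_le[OF _ _ assms] by (meson order.antisym)
qed

lemma otp_iso:
  fixes S T :: "'a::wellorder set"
  assumes b: "bij_betw h S T" and s: "strict_mono_on S h"
  shows "otp S = otp T"
proof -
  have "(\<exists>f. bij_betw f S {..<g} \<and> strict_mono_on S f) = (\<exists>f. bij_betw f T {..<g} \<and> strict_mono_on T f)" for g :: 'a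
  proof
    assume "\<exists>f. bij_betw f S {..<g} \<and> strict_mono_on S f"
    then obtain f where f: "bij_betw f S {..<g}" "strict_mono_on S f" by blast
    have "bij_betw (f \<circ> the_inv_into S h) T {..<g}" using bij_betw_trans[OF inv_bij[OF b] f(1)] .
    moreover have "strict_mono_on T (f \<circ> the_inv_into S h)"
    proof (rule strict_mono_onI)
      fix x y assume "x \<in> T" "y \<in> T" "x < y"
      moreover have "the_inv_into S h ` T \<subseteq> S" using inv_bij[OF b] by (auto simp: bij_betw_def)
      ultimately have "the_inv_into S h x \<in> S" "the_inv_into S h y \<in> S"
         "the_inv_into S h x < the_inv_into S h y"
        using strict_mono_onD[OF inv_smo[OF b s]] by auto
      thus "(f \<circ> the_inv_into S h) x < (f \<circ> the_inv_into S h) y"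
        using strict_mono_onD[OF f(2)] by auto
    qed
    ultimately show "\<exists>f. bij_betw f T {..<g} \<and> strict_mono_on T f" by blast
  next
    assume "\<exists>f. bij_betw f T {..<g} \<and> strict_mono_on T f"
    then obtain f where f: "bij_betw f T {..<g}" "strict_mono_on T f" by blast
    have "bij_betw (f \<circ> h) S {..<g}" using bij_betw_trans[OF b f(1)] .
    moreover have "strict_mono_on S (f \<circ> h)"
    proof (rule strict_mono_onI)
      fix x y assume "x \<in> S" "y \<in> S" "x < y"
      moreover have "h ` S \<subseteq> T" using b by (auto simp: bij_betw_def)
      ultimately have "h x \<in> T" "h y \<in> T" "h x < h y" using strict_mono_onD[OF s] by auto
      thus "(f \<circ> h) x < (f \<circ> h) y"
        using strict_mono_onD[OF f(2)] by auto
    qed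
    ultimately show "\<exists>f. bij_betw f S {..<g} \<and> strict_mono_on S f" by blast
  qed
  thus ?thesis unfolding otp_def by simp
qed

lemma otp_tail:
  fixes A B :: "'a::wellorder set" and \<xi> \<delta> :: 'a
  assumes le: "\<xi> \<le> \<delta>" and tl: "A \<inter> {\<xi>..<\<delta>} = B \<inter> {\<xi>..<\<delta>}"
    and oe: "otp (A \<inter> {..<\<xi>}) = otp (B \<inter> {..<\<xi>})"
  shows "otp (A \<inter> {..<\<delta>}) = otp (B \<inter> {..<\<delta>})"
proof -
  obtain gA :: 'a and fA :: "'a \<Rightarrow> 'a" where fA: "bij_betw fA (A \<inter> {..<\<xi>}) {..<gA}" "strict_mono_on (A \<inter> {..<\<xi>}) fA"
    using otp_exists[of "A \<inter> {..<\<xi>}" \<xi>, OF Int_lower2] by blast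
  obtain gB :: 'a and fB :: "'a \<Rightarrow> 'a" where fB: "bij_betw fB (B \<inter> {..<\<xi>}) {..<gB}" "strict_mono_on (B \<inter> {..<\<xi>}) fB"
    using otp_exists[of "B \<inter> {..<\<xi>}" \<xi>, OF Int_lower2] by blast
  have "gA = gB" using otp_eq[OF fA] otp_eq[OF fB] oe by simp
  have fA1: "bij_betw fA (A \<inter> {..<\<xi>}) {..<gB}" using fA(1) \<open>gA = gB\<close> by simp
  define k where "k = the_inv_into (B \<inter> {..<\<xi>}) fB \<circ> fA"
  have kb: "bij_betw k (A \<inter> {..<\<xi>}) (B \<inter> {..<\<xi>})" unfolding k_def
    using bij_betw_trans[OF fA1 inv_bij[OF fB(1)]] by simp
  have ks: "strict_mono_on (A \<inter> {..<\<xi>}) k" unfolding k_def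
  proof (rule strict_mono_onI)
    fix x y assume xy: "x \<in> A \<inter> {..<\<xi>}" "y \<in> A \<inter> {..<\<xi>}" "x < y"
    hence "fA x \<in> {..<gB}" "fA y \<in> {..<gB}" "fA x < fA y"
      using fA \<open>gA = gB\<close> strict_mono_onD[OF fA(2)] by (auto simp: bij_betw_def)
    thus "(the_inv_into (B \<inter> {..<\<xi>}) fB \<circ> fA) x < (the_inv_into (B \<inter> {..<\<xi>}) fB \<circ> fA) y"
      using strict_mono_onD[OF inv_smo[OF fB]] by auto
  qed
  define H where "H = (\<lambda>x. if x < \<xi> then k x else x)"
  have kin: "x \<in> A \<inter> {..<\<xi>} \<Longrightarrow> k x \<in> B \<inter> {..<\<xi>}" for x using kb by (auto simp: bij_betw_def)
  have Hs: "strict_mono_on (A \<inter> {..<\<delta>}) H"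
  proof (rule strict_mono_onI)
    fix x y assume xy: "x \<in> A \<inter> {..<\<delta>}" "y \<in> A \<inter> {..<\<delta>}" "x < y"
    show "H x < H y"
    proof (cases "y < \<xi>")
      case True
      thus ?thesis using xy strict_mono_onD[OF ks] unfolding H_def by auto
    next
      case False
      show ?thesis
      proof (cases "x < \<xi>")
        case True
        thus ?thesis using False xy kin[of x] unfolding H_def by auto
      next
        case False2: False
        thus ?thesis using False xy unfolding H_def by auto
      qed
    qed
  qed
  have "H ` (A \<inter> {..<\<delta>}) = B \<inter> {..<\<delta>}"
  proof -
    have split: "X \<inter> {..<\<delta>} = (X \<inter> {..<\<xi>}) \<union> (X \<inter> {\<xi>..<\<delta>})" for X using le by auto
    have "H ` (A \<inter> {..<\<xi>}) = k ` (A \<inter> {..<\<xi>})" unfolding H_def by (rule image_cong) auto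
    also have "\<dots> = B \<inter> {..<\<xi>}" using kb by (simp add: bij_betw_def)
    finally have 1: "H ` (A \<inter> {..<\<xi>}) = B \<inter> {..<\<xi>}" .
    have "H ` (A \<inter> {\<xi>..<\<delta>}) = A \<inter> {\<xi>..<\<delta>}" unfolding H_def by (auto simp: image_iff)
    thus ?thesis using 1 tl split[of A] split[of B] by (simp add: image_Un)
  qed
  hence "bij_betw H (A \<inter> {..<\<delta>}) (B \<inter> {..<\<delta>})"
    using strict_mono_on_imp_inj_on[OF Hs] by (simp add: bij_betw_def)
  thus ?thesis using otp_iso Hs by blast
qed

definition nxt :: "('a::wellorder \<Rightarrow> 'a set) \<Rightarrow> 'a \<Rightarrow> 'a \<Rightarrow> 'a" where
  "nxt C \<gamma> \<xi> = (LEAST x. x \<in> C \<gamma> \<and> \<xi> \<le> x)"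

lemma Tr_Suc': "Tr C \<xi> \<gamma> (Suc n) = (if \<xi> < Tr C \<xi> \<gamma> n then nxt C (Tr C \<xi> \<gamma> n) \<xi> else \<xi>)"
  by (simp add: nxt_def)

lemma Tr_shift: "\<xi> < \<gamma> \<Longrightarrow> Tr C \<xi> \<gamma> (Suc n) = Tr C \<xi> (nxt C \<gamma> \<xi>) n"
  by (induction n) (simp_all only: Tr_Suc', simp_all)

lemma Tr_self: "Tr C \<xi> \<xi> n = \<xi>"
  by (induction n) auto

lemma nxt_eq: "g \<in> C \<gamma> \<Longrightarrow> \<xi> \<le> g \<Longrightarrow> (\<And>x. x \<in> C \<gamma> \<Longrightarrow> \<xi> \<le> x \<Longrightarrow> g \<le> x) \<Longrightarrow> nxt C \<gamma> \<xi> = g"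
  unfolding nxt_def by (rule Least_equality) auto

lemma ord_sup_lt: "ord_sup {..<\<gamma>} \<ge> \<xi>" if "\<xi> < \<gamma>" for \<xi> \<gamma> :: "'a::wellorder"
proof -
  have "\<forall>y\<in>{..<\<gamma>}. y \<le> ord_sup {..<\<gamma>}" unfolding ord_sup_def
    by (rule LeastI[of _ \<gamma>]) auto
  thus ?thesis using that by auto
qed

lemma nxt_props:
  fixes C :: "'a::wellorder \<Rightarrow> 'a set"
  assumes cs: "C_sequence C" and pos: "y < \<xi>" and lt: "\<xi> < \<gamma>"
  shows "nxt C \<gamma> \<xi> \<in> C \<gamma> \<and> \<xi> \<le> nxt C \<gamma> \<xi> \<and> nxt C \<gamma> \<xi> < \<gamma> \<and>
         (\<forall>x\<in>C \<gamma>. \<xi> \<le> x \<longrightarrow> nxt C \<gamma> \<xi> \<le> x)"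
proof -
  have cl: "closed_subset (C \<gamma>) \<gamma>" and os: "ord_sup (C \<gamma>) = ord_sup {..<\<gamma>}"
    using cs by (auto simp: C_sequence_def)
  have ex: "\<exists>x\<in>C \<gamma>. \<xi> \<le> x"
  proof (rule ccontr)
    assume "\<not> (\<exists>x\<in>C \<gamma>. \<xi> \<le> x)"
    hence allb: "\<forall>x\<in>C \<gamma>. x < \<xi>" by auto
    have ub: "\<forall>x\<in>C \<gamma>. x \<le> \<xi>" using allb by auto
    have "ord_sup (C \<gamma>) \<le> \<xi>" unfolding ord_sup_def by (rule Least_le) (use ub in auto)
    moreover have "\<xi> \<le> ord_sup (C \<gamma>)" using os ord_sup_lt[OF lt] by simp
    ultimately have eq: "ord_sup (C \<gamma>) = \<xi>" by simp
    have unb: "\<forall>z<\<xi>. \<exists>c\<in>C \<gamma>. z < c"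
    proof (intro allI impI)
      fix z assume "z < \<xi>"
      hence "\<not> (\<forall>c\<in>C \<gamma>. c \<le> z)"
        using not_less_Least[of z "\<lambda>x. \<forall>y\<in>C \<gamma>. y \<le> x"] eq unfolding ord_sup_def by auto
      thus "\<exists>c\<in>C \<gamma>. z < c" by (auto simp: not_le)
    qed
    have "\<xi> \<in> acc" unfolding acc_def
    proof (intro CollectI conjI allI impI)
      show "\<exists>y. y < \<xi>" using pos by blast
    next
      fix z assume "z < \<xi>"
      then obtain c where "c \<in> C \<gamma>" "z < c" using unb by blast
      thus "\<exists>w. z < w \<and> w < \<xi>" using allb by blast
    qed
    moreover have "\<forall>z<\<xi>. \<exists>c\<in>C \<gamma>. z \<le> c \<and> c < \<xi>"
      using unb allb by (meson less_imp_le)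
    ultimately have "\<xi> \<in> C \<gamma>" using cl lt unfolding closed_subset_def by blast
    thus False using allb by blast
  qed
  then obtain x0 where x0: "x0 \<in> C \<gamma>" "\<xi> \<le> x0" by blast
  have P: "nxt C \<gamma> \<xi> \<in> C \<gamma> \<and> \<xi> \<le> nxt C \<gamma> \<xi>" unfolding nxt_def
    by (rule LeastI[of _ x0]) (use x0 in auto)
  have M: "\<forall>x\<in>C \<gamma>. \<xi> \<le> x \<longrightarrow> nxt C \<gamma> \<xi> \<le> x" unfolding nxt_def
    by (auto intro: Least_le)
  have "nxt C \<gamma> \<xi> < \<gamma>" using P cl unfolding closed_subset_def by auto
  thus ?thesis using P M by blast
qed

lemma reach:
  fixes C :: "'a::wellorder \<Rightarrow> 'a set"
  assumes cs: "C_sequence C" and pos: "y < \<xi>"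
  shows "\<xi> \<le> \<gamma> \<Longrightarrow> \<exists>l. Tr C \<xi> \<gamma> l = \<xi>"
proof (induction \<gamma> rule: less_induct)
  case (less \<gamma>)
  show ?case
  proof (cases "\<xi> = \<gamma>")
    case True
    thus ?thesis by (intro exI[of _ 0]) simp
  next
    case False
    hence lt: "\<xi> < \<gamma>" using less.prems by simp
    note np = nxt_props[OF cs pos lt]
    then obtain l where "Tr C \<xi> (nxt C \<gamma> \<xi>) l = \<xi>" using less.IH by blast
    thus ?thesis using Tr_shift[OF lt, of C l] by metis
  qed
qed

lemma rho2_self: "rho2 C \<xi> \<xi> = 0"
  unfolding rho2_def by (simp add: Tr_self)

lemma rho0_self: "rho0 C \<xi> \<xi> = []"
  unfolding rho0_def by (simp add: rho2_self)

lemma rho0_step: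
  fixes C :: "'a::wellorder \<Rightarrow> 'a set"
  assumes cs: "C_sequence C" and pos: "y < \<xi>" and lt: "\<xi> < \<gamma>"
  shows "rho0 C \<xi> \<gamma> = otp (C \<gamma> \<inter> {..<\<xi>}) # rho0 C \<xi> (nxt C \<gamma> \<xi>)"
proof -
  let ?g = "nxt C \<gamma> \<xi>"
  have "\<xi> \<le> ?g" using nxt_props[OF cs pos lt] by blast
  then obtain l where l: "Tr C \<xi> ?g l = \<xi>" using reach[OF cs pos] by blast
  have r2: "rho2 C \<xi> \<gamma> = Suc (rho2 C \<xi> ?g)"
  proof -
    have "Tr C \<xi> \<gamma> (Suc l) = \<xi>" using l Tr_shift[OF lt] by simp
    moreover have "Tr C \<xi> \<gamma> 0 \<noteq> \<xi>" using lt by simp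
    ultimately have "(LEAST n. Tr C \<xi> \<gamma> n = \<xi>) = Suc (LEAST m. Tr C \<xi> \<gamma> (Suc m) = \<xi>)"
      by (rule Least_Suc)
    thus ?thesis unfolding rho2_def using Tr_shift[OF lt] by simp
  qed
  show ?thesis unfolding rho0_def r2
    by (simp only: upt_conv_Cons[of 0 "Suc (rho2 C \<xi> ?g)"] map_Suc_upt[symmetric])
       (simp del: Tr.simps(2) add: Tr_shift[OF lt] comp_def)
qed

lemma rho0_in:
  fixes C :: "'a::wellorder \<Rightarrow> 'a set"
  assumes cs: "C_sequence C" and pos: "y < \<xi>" and lt: "\<xi> < \<gamma>" and xi: "\<xi> \<in> C \<gamma>"
  shows "rho0 C \<xi> \<gamma> = [otp (C \<gamma> \<inter> {..<\<xi>})]"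
proof -
  have "nxt C \<gamma> \<xi> = \<xi>" by (rule nxt_eq) (use xi in auto)
  thus ?thesis using rho0_step[OF cs pos lt] rho0_self by simp
qed

lemma rho0_notin:
  fixes C :: "'a::wellorder \<Rightarrow> 'a set"
  assumes cs: "C_sequence C" and pos: "y < \<xi>" and lt: "\<xi> < \<gamma>" and xi: "\<xi> \<notin> C \<gamma>"
  shows "2 \<le> length (rho0 C \<xi> \<gamma>)"
proof -
  note np = nxt_props[OF cs pos lt]
  have "nxt C \<gamma> \<xi> \<noteq> \<xi>" using np xi by auto
  hence lt2: "\<xi> < nxt C \<gamma> \<xi>" using np by auto
  show ?thesis using rho0_step[OF cs pos lt] rho0_step[OF cs pos lt2] by simp
qed

lemma rho0_len1:
  fixes C :: "'a::wellorder \<Rightarrow> 'a set"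
  assumes cs: "C_sequence C" and pos: "y < \<xi>" and lt: "\<xi> < \<gamma>"
  shows "(length (rho0 C \<xi> \<gamma>) = 1 \<longleftrightarrow> \<xi> \<in> C \<gamma>) \<and> 1 \<le> length (rho0 C \<xi> \<gamma>)"
  using rho0_in[OF cs pos lt] rho0_notin[OF cs pos lt] by (cases "\<xi> \<in> C \<gamma>") auto

lemma acc_unb:
  fixes C :: "'a::wellorder \<Rightarrow> 'a set"
  assumes cs: "C_sequence C" and d: "\<delta> \<in> acc" and b: "b < \<delta>"
  shows "\<exists>c\<in>C \<delta>. b < c \<and> c < \<delta>"
proof -
  have cl: "C \<delta> \<subseteq> {..<\<delta>}" and os: "ord_sup (C \<delta>) = ord_sup {..<\<delta>}"
    using cs by (auto simp: C_sequence_def closed_subset_def)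
  have "ord_sup {..<\<delta>} = \<delta>" unfolding ord_sup_def
  proof (rule Least_equality)
    show "\<forall>y\<in>{..<\<delta>}. y \<le> \<delta>" by auto
  next
    fix x assume x: "\<forall>y\<in>{..<\<delta>}. y \<le> x"
    show "\<delta> \<le> x"
    proof (rule ccontr)
      assume "\<not> \<delta> \<le> x"
      hence "x < \<delta>" by simp
      then obtain z where "x < z" "z < \<delta>" using d unfolding acc_def by blast
      thus False using x by force
    qed
  qed
  hence os2: "ord_sup (C \<delta>) = \<delta>" using os by simp
  show ?thesis
  proof (rule ccontr)
    assume "\<not> ?thesis"
    hence "\<forall>c\<in>C \<delta>. c \<le> b" using cl by force
    hence "ord_sup (C \<delta>) \<le> b" unfolding ord_sup_def by (rule Least_le)
    thus False using os2 b by simp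
  qed
qed

lemma walk_struct:
  fixes C :: "'a::wellorder \<Rightarrow> 'a set"
  assumes cs: "C_sequence C" and d: "\<delta> \<in> acc"
  shows "\<delta> < \<gamma> \<Longrightarrow> \<exists>\<epsilon><\<delta>. (\<exists>y. y < \<epsilon>) \<and>
    ((\<forall>\<xi>. \<epsilon> \<le> \<xi> \<longrightarrow> \<xi> < \<delta> \<longrightarrow> rho0 C \<xi> \<gamma> = rho0 C \<delta> \<gamma> @ rho0 C \<xi> \<delta>) \<or>
     (\<exists>\<gamma>' p. \<delta> < \<gamma>' \<and> (\<forall>b<\<delta>. \<exists>c\<in>C \<gamma>'. b \<le> c \<and> c < \<delta>) \<and>
        rho0 C \<delta> \<gamma> = p @ [otp (C \<gamma>' \<inter> {..<\<delta>})] \<and>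
        (\<forall>\<xi>. \<epsilon> \<le> \<xi> \<longrightarrow> \<xi> < \<delta> \<longrightarrow> rho0 C \<xi> \<gamma> = p @ rho0 C \<xi> \<gamma>')))"
proof (induction \<gamma> rule: less_induct)
  case (less \<gamma>)
  obtain y0 where y0: "y0 < \<delta>" using d unfolding acc_def by auto
  then obtain e0 where e0: "y0 < e0" "e0 < \<delta>" using d unfolding acc_def by blast
  define g where "g = nxt C \<gamma> \<delta>"
  have np: "g \<in> C \<gamma>" "\<delta> \<le> g" "g < \<gamma>" "\<forall>x\<in>C \<gamma>. \<delta> \<le> x \<longrightarrow> g \<le> x"
    using nxt_props[OF cs y0 less.prems] unfolding g_def by auto
  have cl: "closed_subset (C \<gamma>) \<gamma>" using cs by (auto simp: C_sequence_def)
  have stepd: "rho0 C \<delta> \<gamma> = otp (C \<gamma> \<inter> {..<\<delta>}) # rho0 C \<delta> g"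
    using rho0_step[OF cs y0 less.prems] unfolding g_def .
  show ?case
  proof (cases "\<forall>b<\<delta>. \<exists>c\<in>C \<gamma>. b \<le> c \<and> c < \<delta>")
    case True
    hence "\<delta> \<in> C \<gamma>" using cl d less.prems unfolding closed_subset_def by blast
    hence "g = \<delta>" using np by (meson order.antisym order.refl)
    hence r: "rho0 C \<delta> \<gamma> = [] @ [otp (C \<gamma> \<inter> {..<\<delta>})]" using stepd rho0_self by simp
    have "\<exists>\<gamma>' p. \<delta> < \<gamma>' \<and> (\<forall>b<\<delta>. \<exists>c\<in>C \<gamma>'. b \<le> c \<and> c < \<delta>) \<and>
        rho0 C \<delta> \<gamma> = p @ [otp (C \<gamma>' \<inter> {..<\<delta>})] \<and>
        (\<forall>\<xi>. e0 \<le> \<xi> \<longrightarrow> \<xi> < \<delta> \<longrightarrow> rho0 C \<xi> \<gamma> = p @ rho0 C \<xi> \<gamma>')"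
      using less.prems True r by (intro exI[of _ \<gamma>] exI[of _ "[]"]) simp
    thus ?thesis using e0 by blast
  next
    case False
    then obtain b where b: "b < \<delta>" "\<forall>c\<in>C \<gamma>. b \<le> c \<longrightarrow> \<not> c < \<delta>" by blast
    have key: "nxt C \<gamma> \<xi> = g \<and> C \<gamma> \<inter> {..<\<xi>} = C \<gamma> \<inter> {..<\<delta>}" if "b \<le> \<xi>" "\<xi> < \<delta>" for \<xi>
    proof
      show "nxt C \<gamma> \<xi> = g"
      proof (rule nxt_eq)
        show "g \<in> C \<gamma>" by (rule np(1))
        show "\<xi> \<le> g" using that np by simp
        fix x assume "x \<in> C \<gamma>" "\<xi> \<le> x"
        thus "g \<le> x" using b that np by (meson not_le order.trans)
      qed
      show "C \<gamma> \<inter> {..<\<xi>} = C \<gamma> \<inter> {..<\<delta>}"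
        using b that by (auto simp: not_le)
    qed
    have stepx: "rho0 C \<xi> \<gamma> = otp (C \<gamma> \<inter> {..<\<delta>}) # rho0 C \<xi> g"
      if "b \<le> \<xi>" "\<xi> < \<delta>" "y < \<xi>" for \<xi> y
    proof -
      have "\<xi> < \<gamma>" using that less.prems by simp
      thus ?thesis using rho0_step[OF cs that(3)] key[OF that(1,2)] by simp
    qed
    show ?thesis
    proof (cases "g = \<delta>")
      case True
      have "rho0 C \<delta> \<gamma> = [otp (C \<gamma> \<inter> {..<\<delta>})]" using stepd True rho0_self by simp
      hence "\<forall>\<xi>. max e0 b \<le> \<xi> \<longrightarrow> \<xi> < \<delta> \<longrightarrow> rho0 C \<xi> \<gamma> = rho0 C \<delta> \<gamma> @ rho0 C \<xi> \<delta>"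
        using stepx True e0 by (metis append_Cons append_Nil max.bounded_iff order.strict_trans2)
      moreover have "max e0 b < \<delta>" "y0 < max e0 b" using e0 b by (auto simp: less_max_iff_disj)
      ultimately show ?thesis by blast
    next
      case False
      hence dg: "\<delta> < g" using np by simp
      obtain e1 y1 where e1: "e1 < \<delta>" "y1 < e1" and
        disj: "(\<forall>\<xi>. e1 \<le> \<xi> \<longrightarrow> \<xi> < \<delta> \<longrightarrow> rho0 C \<xi> g = rho0 C \<delta> g @ rho0 C \<xi> \<delta>) \<or>
     (\<exists>\<gamma>' p. \<delta> < \<gamma>' \<and> (\<forall>b<\<delta>. \<exists>c\<in>C \<gamma>'. b \<le> c \<and> c < \<delta>) \<and>
        rho0 C \<delta> g = p @ [otp (C \<gamma>' \<inter> {..<\<delta>})] \<and>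
        (\<forall>\<xi>. e1 \<le> \<xi> \<longrightarrow> \<xi> < \<delta> \<longrightarrow> rho0 C \<xi> g = p @ rho0 C \<xi> \<gamma>'))"
        using less.IH[OF np(3) dg] by blast
      define e where "e = max e1 b"
      have e: "e < \<delta>" "y1 < e" using e1 b unfolding e_def by (auto simp: less_max_iff_disj)
      have sx: "rho0 C \<xi> \<gamma> = otp (C \<gamma> \<inter> {..<\<delta>}) # rho0 C \<xi> g" if "e \<le> \<xi>" "\<xi> < \<delta>" for \<xi>
      proof -
        have "e1 \<le> \<xi>" "b \<le> \<xi>" using that unfolding e_def by auto
        moreover have "y1 < \<xi>" using e1(2) \<open>e1 \<le> \<xi>\<close> by (rule order.strict_trans2)
        ultimately show ?thesis using stepx[of \<xi> y1] that by auto
      qed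
      have e1e: "e1 \<le> \<xi>" if "e \<le> \<xi>" for \<xi> using that unfolding e_def by auto
      from disj show ?thesis
      proof
        assume A: "\<forall>\<xi>. e1 \<le> \<xi> \<longrightarrow> \<xi> < \<delta> \<longrightarrow> rho0 C \<xi> g = rho0 C \<delta> g @ rho0 C \<xi> \<delta>"
        have "\<forall>\<xi>. e \<le> \<xi> \<longrightarrow> \<xi> < \<delta> \<longrightarrow> rho0 C \<xi> \<gamma> = rho0 C \<delta> \<gamma> @ rho0 C \<xi> \<delta>"
          using A sx e1e stepd by simp
        thus ?thesis using e by blast
      next
        assume "\<exists>\<gamma>' p. \<delta> < \<gamma>' \<and> (\<forall>b<\<delta>. \<exists>c\<in>C \<gamma>'. b \<le> c \<and> c < \<delta>) \<and>
          rho0 C \<delta> g = p @ [otp (C \<gamma>' \<inter> {..<\<delta>})] \<and>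
          (\<forall>\<xi>. e1 \<le> \<xi> \<longrightarrow> \<xi> < \<delta> \<longrightarrow> rho0 C \<xi> g = p @ rho0 C \<xi> \<gamma>')"
        then obtain \<gamma>' p where B: "\<delta> < \<gamma>'" "\<forall>b<\<delta>. \<exists>c\<in>C \<gamma>'. b \<le> c \<and> c < \<delta>"
          "rho0 C \<delta> g = p @ [otp (C \<gamma>' \<inter> {..<\<delta>})]"
          "\<forall>\<xi>. e1 \<le> \<xi> \<longrightarrow> \<xi> < \<delta> \<longrightarrow> rho0 C \<xi> g = p @ rho0 C \<xi> \<gamma>'" by blast
        have "rho0 C \<delta> \<gamma> = (otp (C \<gamma> \<inter> {..<\<delta>}) # p) @ [otp (C \<gamma>' \<inter> {..<\<delta>})]"
          using stepd B(3) by simp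
        moreover have "\<forall>\<xi>. e \<le> \<xi> \<longrightarrow> \<xi> < \<delta> \<longrightarrow> rho0 C \<xi> \<gamma> = (otp (C \<gamma> \<inter> {..<\<delta>}) # p) @ rho0 C \<xi> \<gamma>'"
          using B(4) sx e1e by simp
        ultimately show ?thesis using e B(1,2) by blast
      qed
    qed
  qed
qed

lemma mixed:
  fixes C :: "'a::wellorder \<Rightarrow> 'a set"
  assumes cs: "C_sequence C" and dV: "\<delta> \<in> V C" and ey: "y < \<epsilon>" and ed: "\<epsilon> < \<delta>"
    and agree: "\<forall>\<xi>. \<epsilon> \<le> \<xi> \<longrightarrow> \<xi> < \<delta> \<longrightarrow> rho0 C \<xi> a = rho0 C \<xi> b"
    and A: "\<forall>\<xi>. \<epsilon> \<le> \<xi> \<longrightarrow> \<xi> < \<delta> \<longrightarrow> rho0 C \<xi> a = q @ rho0 C \<xi> \<delta>"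
    and g: "\<delta> < \<gamma>'" and unb: "\<forall>b<\<delta>. \<exists>c\<in>C \<gamma>'. b \<le> c \<and> c < \<delta>"
    and B: "\<forall>\<xi>. \<epsilon> \<le> \<xi> \<longrightarrow> \<xi> < \<delta> \<longrightarrow> rho0 C \<xi> b = p @ rho0 C \<xi> \<gamma>'"
  shows False
proof -
  have d: "\<delta> \<in> acc" using dV unfolding V_def by blast
  have len: "length q + length (rho0 C \<xi> \<delta>) = length p + length (rho0 C \<xi> \<gamma>')"
    if "\<epsilon> \<le> \<xi>" "\<xi> < \<delta>" for \<xi>
    using agree A B that by (metis length_append)
  have L: "(length (rho0 C \<xi> \<delta>) = 1 \<longleftrightarrow> \<xi> \<in> C \<delta>) \<and> 1 \<le> length (rho0 C \<xi> \<delta>) \<and>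
           (length (rho0 C \<xi> \<gamma>') = 1 \<longleftrightarrow> \<xi> \<in> C \<gamma>') \<and> 1 \<le> length (rho0 C \<xi> \<gamma>')"
    if "\<epsilon> \<le> \<xi>" "\<xi> < \<delta>" for \<xi>
  proof -
    have p: "y < \<xi>" using ey that by simp
    have "\<xi> < \<gamma>'" using that g by simp
    thus ?thesis using rho0_len1[OF cs p that(2)] rho0_len1[OF cs p] by blast
  qed
  obtain x1 where x1: "x1 \<in> C \<gamma>'" "\<epsilon> \<le> x1" "x1 < \<delta>" using unb ed by blast
  obtain x2 where x2: "x2 \<in> C \<delta>" "\<epsilon> < x2" "x2 < \<delta>" using acc_unb[OF cs d ed] by blast
  have x2e: "\<epsilon> \<le> x2" using x2 by simp
  have "length q \<le> length p" using len[OF x1(2,3)] L[OF x1(2,3)] x1(1) by simp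
  moreover have "length p \<le> length q" using len[OF x2e x2(3)] L[OF x2e x2(3)] x2(1) by simp
  ultimately have eq: "length p = length q" by simp
  have "C \<delta> \<inter> {\<epsilon>..<\<delta>} = C \<gamma>' \<inter> {\<epsilon>..<\<delta>}"
  proof (intro set_eqI iffI)
    fix x assume "x \<in> C \<delta> \<inter> {\<epsilon>..<\<delta>}"
    thus "x \<in> C \<gamma>' \<inter> {\<epsilon>..<\<delta>}" using len[of x] L[of x] eq by auto
  next
    fix x assume "x \<in> C \<gamma>' \<inter> {\<epsilon>..<\<delta>}"
    thus "x \<in> C \<delta> \<inter> {\<epsilon>..<\<delta>}" using len[of x] L[of x] eq by auto
  qed
  thus False using dV g ed unfolding V_def by blast
qed

lemma both:
  fixes C :: "'a::wellorder \<Rightarrow> 'a set"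
  assumes cs: "C_sequence C" and ey: "y < \<epsilon>" and ed: "\<epsilon> < \<delta>"
    and agree: "\<forall>\<xi>. \<epsilon> \<le> \<xi> \<longrightarrow> \<xi> < \<delta> \<longrightarrow> rho0 C \<xi> a = rho0 C \<xi> b"
    and g1: "\<delta> < \<gamma>1" and unb1: "\<forall>b<\<delta>. \<exists>c\<in>C \<gamma>1. b \<le> c \<and> c < \<delta>"
    and D1: "rho0 C \<delta> a = p1 @ [otp (C \<gamma>1 \<inter> {..<\<delta>})]"
    and B1: "\<forall>\<xi>. \<epsilon> \<le> \<xi> \<longrightarrow> \<xi> < \<delta> \<longrightarrow> rho0 C \<xi> a = p1 @ rho0 C \<xi> \<gamma>1"
    and g2: "\<delta> < \<gamma>2" and unb2: "\<forall>b<\<delta>. \<exists>c\<in>C \<gamma>2. b \<le> c \<and> c < \<delta>"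
    and D2: "rho0 C \<delta> b = p2 @ [otp (C \<gamma>2 \<inter> {..<\<delta>})]"
    and B2: "\<forall>\<xi>. \<epsilon> \<le> \<xi> \<longrightarrow> \<xi> < \<delta> \<longrightarrow> rho0 C \<xi> b = p2 @ rho0 C \<xi> \<gamma>2"
  shows "rho0 C \<delta> a = rho0 C \<delta> b"
proof -
  have lst: "p1 @ rho0 C \<xi> \<gamma>1 = p2 @ rho0 C \<xi> \<gamma>2" if "\<epsilon> \<le> \<xi>" "\<xi> < \<delta>" for \<xi>
    using agree B1 B2 that by metis
  have L: "(length (rho0 C \<xi> \<gamma>1) = 1 \<longleftrightarrow> \<xi> \<in> C \<gamma>1) \<and> 1 \<le> length (rho0 C \<xi> \<gamma>1) \<and>
           (length (rho0 C \<xi> \<gamma>2) = 1 \<longleftrightarrow> \<xi> \<in> C \<gamma>2) \<and> 1 \<le> length (rho0 C \<xi> \<gamma>2)"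
    if "\<epsilon> \<le> \<xi>" "\<xi> < \<delta>" for \<xi>
  proof -
    have p: "y < \<xi>" using ey that by simp
    have "\<xi> < \<gamma>1" "\<xi> < \<gamma>2" using that g1 g2 by auto
    thus ?thesis using rho0_len1[OF cs p] by blast
  qed
  have len: "length p1 + length (rho0 C \<xi> \<gamma>1) = length p2 + length (rho0 C \<xi> \<gamma>2)"
    if "\<epsilon> \<le> \<xi>" "\<xi> < \<delta>" for \<xi>
    using lst[OF that] by (metis length_append)
  obtain x1 where x1: "x1 \<in> C \<gamma>1" "\<epsilon> \<le> x1" "x1 < \<delta>" using unb1 ed by blast
  obtain x2 where x2: "x2 \<in> C \<gamma>2" "\<epsilon> \<le> x2" "x2 < \<delta>" using unb2 ed by blast
  have "length p2 \<le> length p1" using len[OF x1(2,3)] L[OF x1(2,3)] x1(1) by simp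
  moreover have "length p1 \<le> length p2" using len[OF x2(2,3)] L[OF x2(2,3)] x2(1) by simp
  ultimately have eq: "length p1 = length p2" by simp
  hence pe: "p1 = p2" using lst[OF x1(2,3)] by (simp add: append_eq_append_conv)
  have re: "rho0 C \<xi> \<gamma>1 = rho0 C \<xi> \<gamma>2" if "\<epsilon> \<le> \<xi>" "\<xi> < \<delta>" for \<xi>
    using lst[OF that] pe by simp
  have mem: "\<xi> \<in> C \<gamma>1 \<longleftrightarrow> \<xi> \<in> C \<gamma>2" if "\<epsilon> \<le> \<xi>" "\<xi> < \<delta>" for \<xi>
    using L[OF that] re[OF that] by metis
  have x1b: "x1 \<in> C \<gamma>2" using mem[OF x1(2,3)] x1(1) by simp
  have py: "y < x1" using ey x1 by simp
  have "[otp (C \<gamma>1 \<inter> {..<x1})] = [otp (C \<gamma>2 \<inter> {..<x1})]"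
    using rho0_in[OF cs py _ x1(1)] rho0_in[OF cs py _ x1b] re[OF x1(2,3)] g1 g2 x1(3) by simp
  hence oe: "otp (C \<gamma>1 \<inter> {..<x1}) = otp (C \<gamma>2 \<inter> {..<x1})" by simp
  have tl: "C \<gamma>1 \<inter> {x1..<\<delta>} = C \<gamma>2 \<inter> {x1..<\<delta>}" using mem x1(2) by auto
  have "otp (C \<gamma>1 \<inter> {..<\<delta>}) = otp (C \<gamma>2 \<inter> {..<\<delta>})"
    by (rule otp_tail[OF _ tl oe]) (use x1 in simp)
  thus ?thesis using D1 D2 pe by simp
qed

lemma lessThan_inj': "{..<x} = {..<(y::'a::linorder)} \<Longrightarrow> x = y"
proof (rule ccontr)
  assume e: "{..<x} = {..<y}" and "x \<noteq> y"
  hence "x < y \<or> y < x" by auto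
  thus False
  proof
    assume "x < y" hence "x \<in> {..<y}" by simp
    thus False using e by auto
  next
    assume "y < x" hence "y \<in> {..<x}" by simp
    thus False using e by auto
  qed
qed

theorem lemma5p1:
  fixes C :: "'a::wellorder \<Rightarrow> 'a set" and \<alpha> \<beta> :: 'a
  assumes "regular_uncountable_cardinal_type TYPE('a)"
    and "C_sequence C"
    and "\<alpha> < \<beta>"
    and "\<not> (rho0_fiber C \<alpha> \<subseteq>\<^sub>m rho0_fiber C \<beta>)"
    and "\<not> (rho0_fiber C \<beta> \<subseteq>\<^sub>m rho0_fiber C \<alpha>)"
  shows "Delta (rho0_fiber C \<alpha>) (rho0_fiber C \<beta>) \<notin> V C"
proof
  assume dV0: "Delta (rho0_fiber C \<alpha>) (rho0_fiber C \<beta>) \<in> V C"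
  note cs = assms(2)
  define f where "f = rho0_fiber C \<alpha>"
  define g where "g = rho0_fiber C \<beta>"
  define \<delta> where "\<delta> = Delta f g"
  have dV: "\<delta> \<in> V C" using dV0 unfolding \<delta>_def f_def g_def .
  have d: "\<delta> \<in> acc" using dV unfolding V_def by blast
  have domf: "dom f = {..<\<alpha>}" unfolding f_def by (auto simp: dom_def rho0_fiber_def)
  have domg: "dom g = {..<\<beta>}" unfolding g_def by (auto simp: dom_def rho0_fiber_def)
  obtain \<xi>0 where x0: "\<xi>0 \<in> dom f" "f \<xi>0 \<noteq> g \<xi>0" using assms(4) unfolding f_def g_def map_le_def by blast
  define P where "P x = (dom f = {..<x} \<or> dom g = {..<x} \<or> (x \<in> dom f \<inter> dom g \<and> f x \<noteq> g x))" for x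
  have dl: "\<delta> = (LEAST x. P x)" unfolding \<delta>_def Delta_def P_def ..
  have "P \<xi>0" unfolding P_def using x0 domf domg assms(3) by auto
  hence "\<delta> \<le> \<xi>0" unfolding dl by (rule Least_le)
  hence da: "\<delta> < \<alpha>" using x0 domf by auto
  hence db: "\<delta> < \<beta>" using assms(3) by simp
  have "P \<delta>" unfolding dl by (rule LeastI[of _ \<xi>0]) fact
  moreover have "dom f \<noteq> {..<\<delta>}" using domf da lessThan_inj' by fastforce
  moreover have "dom g \<noteq> {..<\<delta>}" using domg db lessThan_inj' by fastforce
  ultimately have "f \<delta> \<noteq> g \<delta>" unfolding P_def by blast
  hence neq: "rho0 C \<delta> \<alpha> \<noteq> rho0 C \<delta> \<beta>" using da db unfolding f_def g_def rho0_fiber_def by simp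
  have below: "rho0 C \<xi> \<alpha> = rho0 C \<xi> \<beta>" if "\<xi> < \<delta>" for \<xi>
  proof -
    have "\<not> P \<xi>" using that unfolding dl by (rule not_less_Least)
    moreover have "\<xi> \<in> dom f \<inter> dom g" using that da db domf domg by auto
    ultimately have "f \<xi> = g \<xi>" unfolding P_def by blast
    moreover have "\<xi> < \<alpha>" "\<xi> < \<beta>" using that da db by auto
    ultimately show ?thesis unfolding f_def g_def rho0_fiber_def by simp
  qed
  obtain ea ya where ea: "ea < \<delta>" "ya < ea" and
    Da: "(\<forall>\<xi>. ea \<le> \<xi> \<longrightarrow> \<xi> < \<delta> \<longrightarrow> rho0 C \<xi> \<alpha> = rho0 C \<delta> \<alpha> @ rho0 C \<xi> \<delta>) \<or>
     (\<exists>\<gamma>' p. \<delta> < \<gamma>' \<and> (\<forall>b<\<delta>. \<exists>c\<in>C \<gamma>'. b \<le> c \<and> c < \<delta>) \<and>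
        rho0 C \<delta> \<alpha> = p @ [otp (C \<gamma>' \<inter> {..<\<delta>})] \<and>
        (\<forall>\<xi>. ea \<le> \<xi> \<longrightarrow> \<xi> < \<delta> \<longrightarrow> rho0 C \<xi> \<alpha> = p @ rho0 C \<xi> \<gamma>'))"
    using walk_struct[OF cs d da] by blast
  obtain eb yb where eb: "eb < \<delta>" "yb < eb" and
    Db: "(\<forall>\<xi>. eb \<le> \<xi> \<longrightarrow> \<xi> < \<delta> \<longrightarrow> rho0 C \<xi> \<beta> = rho0 C \<delta> \<beta> @ rho0 C \<xi> \<delta>) \<or>
     (\<exists>\<gamma>' p. \<delta> < \<gamma>' \<and> (\<forall>b<\<delta>. \<exists>c\<in>C \<gamma>'. b \<le> c \<and> c < \<delta>) \<and>
        rho0 C \<delta> \<beta> = p @ [otp (C \<gamma>' \<inter> {..<\<delta>})] \<and>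
        (\<forall>\<xi>. eb \<le> \<xi> \<longrightarrow> \<xi> < \<delta> \<longrightarrow> rho0 C \<xi> \<beta> = p @ rho0 C \<xi> \<gamma>'))"
    using walk_struct[OF cs d db] by blast
  define e where "e = max ea eb"
  have e: "e < \<delta>" "ya < e" "ea \<le> e" "eb \<le> e" using ea eb unfolding e_def by (auto simp: less_max_iff_disj)
  have agree: "\<forall>\<xi>. e \<le> \<xi> \<longrightarrow> \<xi> < \<delta> \<longrightarrow> rho0 C \<xi> \<alpha> = rho0 C \<xi> \<beta>" using below by blast
  have agree': "\<forall>\<xi>. e \<le> \<xi> \<longrightarrow> \<xi> < \<delta> \<longrightarrow> rho0 C \<xi> \<beta> = rho0 C \<xi> \<alpha>" using below by metis
  have mono: "\<forall>\<xi>. e \<le> \<xi> \<longrightarrow> \<xi> < \<delta> \<longrightarrow> Q \<xi>" if "\<forall>\<xi>. e' \<le> \<xi> \<longrightarrow> \<xi> < \<delta> \<longrightarrow> Q \<xi>" "e' \<le> e" for Q e'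
    using that by (meson order.trans)
  show False
  proof (cases "\<forall>\<xi>. ea \<le> \<xi> \<longrightarrow> \<xi> < \<delta> \<longrightarrow> rho0 C \<xi> \<alpha> = rho0 C \<delta> \<alpha> @ rho0 C \<xi> \<delta>")
    case A1: True
    show False
    proof (cases "\<forall>\<xi>. eb \<le> \<xi> \<longrightarrow> \<xi> < \<delta> \<longrightarrow> rho0 C \<xi> \<beta> = rho0 C \<delta> \<beta> @ rho0 C \<xi> \<delta>")
      case True
      have "rho0 C \<delta> \<alpha> @ rho0 C e \<delta> = rho0 C \<delta> \<beta> @ rho0 C e \<delta>"
      proof -
        have "rho0 C e \<alpha> = rho0 C \<delta> \<alpha> @ rho0 C e \<delta>" using A1 e by blast
        moreover have "rho0 C e \<beta> = rho0 C \<delta> \<beta> @ rho0 C e \<delta>" using True e by blast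
        moreover have "rho0 C e \<alpha> = rho0 C e \<beta>" using agree e by blast
        ultimately show ?thesis by simp
      qed
      thus False using neq by simp
    next
      case False
      then obtain \<gamma>' p where B: "\<delta> < \<gamma>'" "\<forall>b<\<delta>. \<exists>c\<in>C \<gamma>'. b \<le> c \<and> c < \<delta>"
        "\<forall>\<xi>. eb \<le> \<xi> \<longrightarrow> \<xi> < \<delta> \<longrightarrow> rho0 C \<xi> \<beta> = p @ rho0 C \<xi> \<gamma>'" using Db by blast
      show False
        by (rule mixed[OF cs dV e(2) e(1) agree mono[OF A1 e(3)] B(1,2) mono[OF B(3) e(4)]])
    qed
  next
    case False
    then obtain \<gamma>1 p1 where B1: "\<delta> < \<gamma>1" "\<forall>b<\<delta>. \<exists>c\<in>C \<gamma>1. b \<le> c \<and> c < \<delta>"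
      "rho0 C \<delta> \<alpha> = p1 @ [otp (C \<gamma>1 \<inter> {..<\<delta>})]"
      "\<forall>\<xi>. ea \<le> \<xi> \<longrightarrow> \<xi> < \<delta> \<longrightarrow> rho0 C \<xi> \<alpha> = p1 @ rho0 C \<xi> \<gamma>1" using Da by blast
    show False
    proof (cases "\<forall>\<xi>. eb \<le> \<xi> \<longrightarrow> \<xi> < \<delta> \<longrightarrow> rho0 C \<xi> \<beta> = rho0 C \<delta> \<beta> @ rho0 C \<xi> \<delta>")
      case True
      show False
        by (rule mixed[OF cs dV e(2) e(1) agree' mono[OF True e(4)] B1(1,2) mono[OF B1(4) e(3)]])
    next
      case False
      then obtain \<gamma>2 p2 where B2: "\<delta> < \<gamma>2" "\<forall>b<\<delta>. \<exists>c\<in>C \<gamma>2. b \<le> c \<and> c < \<delta>"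
        "rho0 C \<delta> \<beta> = p2 @ [otp (C \<gamma>2 \<inter> {..<\<delta>})]"
        "\<forall>\<xi>. eb \<le> \<xi> \<longrightarrow> \<xi> < \<delta> \<longrightarrow> rho0 C \<xi> \<beta> = p2 @ rho0 C \<xi> \<gamma>2" using Db by blast
      have "rho0 C \<delta> \<alpha> = rho0 C \<delta> \<beta>"
        by (rule both[OF cs e(2) e(1) agree B1(1,2,3) mono[OF B1(4) e(3)] B2(1,2,3) mono[OF B2(4) e(4)]])
      thus False using neq by simp
    qed
  qed
qed

end
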